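(* In the setting below, if $\eta \geq \eta_0$, then $\tau \leq 2 + \frac{4n}{\gamma} + \frac{142\log(2/\gamma^2)}{\gamma^2}$.
   Context: Dimension $d=2$. Data $x_1,\dots,x_n\in\mathbb{R}^2$ with $\|x_i\|\le 1$, linearly separable (some $w$ has $\langle w,x_i\rangle>0$ for all $i$). $F(w) = \frac{1}{n}\sum_{i=1}^n \log(1+\exp(-\langle w, x_i\rangle))$. Maximum margin $\gamma = \max_{\|w\|=1}\min_i \langle w, x_i\rangle$. Gradient descent: $w_0=0$, $w_{t+1} = w_t - \eta\nabla F(w_t)$ with constant $\eta>0$. $\tau = \min\{t\ge 0: F(w_t)\le 1/(8\eta)\}$ ($\tau=\infty$ if no such $t$). $\eta_0 = \max(n, \frac{32}{\gamma^2}\log\frac{256}{\gamma^2})$. *)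

theory Defs
  imports "HOL-Analysis.Analysis"
begin

definition logloss :: "nat \<Rightarrow> (nat \<Rightarrow> real^2) \<Rightarrow> real^2 \<Rightarrow> real" where
  "logloss n x w = (1 / real n) * (\<Sum>i<n. ln (1 + exp (- (w \<bullet> x i))))"

text \<open>Gradient descent with w_0 = 0, using the (Frechet) gradient of the loss.\<close>
primrec gd :: "nat \<Rightarrow> (nat \<Rightarrow> real^2) \<Rightarrow> real \<Rightarrow> nat \<Rightarrow> real^2" where
  "gd n x \<eta> 0 = 0"
| "gd n x \<eta> (Suc t) = gd n x \<eta> t - \<eta> *\<^sub>R
     (\<Sum>i<n. (- 1 / (real n * (1 + exp ((gd n x \<eta> t) \<bullet> x i)))) *\<^sub>R x i)"

definition max_margin :: "nat \<Rightarrow> (nat \<Rightarrow> real^2) \<Rightarrow> real" where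
  "max_margin n x = (SUP w \<in> {w::real^2. norm w = 1}. (MIN i\<in>{..<n}. w \<bullet> x i))"

end

theory Submission
  imports Defs
begin

definition gg :: "real \<Rightarrow> real" where "gg z = 1 / (1 + exp z)"
definition ll :: "real \<Rightarrow> real" where "ll z = ln (1 + exp (- z))"

lemma ep1: "0 < 1 + exp (z::real)" by (smt (verit) exp_gt_zero)
lemma gg_pos: "0 < gg z" using ep1[of z] by (simp add: gg_def)
lemma gg_le1: "gg z \<le> 1" using ep1[of z] by (simp add: gg_def)
lemma gg_ge_half: assumes "z \<le> 0" shows "gg z \<ge> 1/2"
proof -
  have "exp z \<le> 1" using assms by simp
  thus ?thesis using ep1[of z] by (simp add: gg_def divide_simps)
qed
lemma gg_le_exp: "gg z \<le> exp (- z)"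
proof -
  have "1 / (1 + exp z) \<le> 1 / exp z" by (rule divide_left_mono) (auto simp: add_pos_pos)
  thus ?thesis by (simp add: gg_def exp_minus field_simps)
qed
lemma gg_antimono: "z \<le> z' \<Longrightarrow> gg z' \<le> gg z"
  unfolding gg_def by (rule divide_left_mono) (auto simp: ep1 intro: mult_pos_pos)
lemma gg_ge_at: "z \<le> L \<Longrightarrow> gg z \<ge> 1 / (1 + exp L)"
  using gg_antimono[of z L] by (simp add: gg_def)
lemma ll_pos: "0 < ll z" unfolding ll_def by (rule ln_gt_zero) simp
lemma ll_le_exp: "ll z \<le> exp (- z)"
  unfolding ll_def by (rule ln_add_one_self_le_self) simp
lemma ll_antimono: "z \<le> z' \<Longrightarrow> ll z' \<le> ll z"
  unfolding ll_def by (subst ln_le_cancel_iff) (auto simp: ep1)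
lemma gg_alt: "gg y = exp (-y) / (1 + exp (-y))"
proof -
  have E: "exp y \<noteq> 0" "1 + exp y \<noteq> 0" using ep1[of y] by auto
  have "exp (-y) / (1 + exp (-y)) = (1 / exp y) / (1 + 1 / exp y)" by (simp add: exp_minus divide_inverse)
  also have "\<dots> = 1 / (exp y + 1)" using E by (simp add: field_simps)
  finally show ?thesis unfolding gg_def by (simp add: add.commute)
qed

lemma gg_ge_ll_half: assumes "0 \<le> z" shows "ll z / 2 \<le> gg z"
proof -
  have "exp (-z) \<le> 1" using assms by simp
  have "gg z = exp (-z) / (1 + exp (-z))" by (rule gg_alt)
  also have "\<dots> \<ge> exp (-z) / 2" using \<open>exp (-z) \<le> 1\<close> exp_gt_zero[of "-z"] by (intro divide_left_mono) (auto intro: add_pos_pos)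
  finally show ?thesis using ll_le_exp[of z] by linarith
qed

lemma aux_frac: fixes A D :: real assumes "A > 0" "D > 0"
  shows "(1 - (1/(A*D))/(1+1/(A*D))) + (1/(A*D))/(1+1/(A*D)) * D = (1 + 1/A)/(1 + 1/(A*D))"
proof -
  define v where "v = 1/(A*D)"
  have v: "v > 0" using assms by (simp add: v_def)
  have "1 - v/(1+v) = 1/(1+v)" using v by (simp add: field_simps)
  moreover have "v * D = 1 / A" using assms by (simp add: v_def)
  ultimately have "(1 - v/(1+v)) + v/(1+v) * D = (1 + v * D)/(1+v)"
    using v by (simp add: add_divide_distrib)
  thus ?thesis using \<open>v * D = 1 / A\<close> unfolding v_def by simp
qed

lemma ll_drop: assumes "0 \<le> d" shows "ll z - ll (z + d) \<ge> d * gg (z + d)"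
proof -
  define v where "v = exp (- (z + d))"
  define c where "c = v / (1 + v)"
  have v: "0 < v" by (simp add: v_def)
  have c: "0 \<le> c" "c \<le> 1" using v by (auto simp: c_def)
  have "exp (c * d) = exp ((1 - c) *\<^sub>R 0 + c *\<^sub>R d)" by simp
  also have "\<dots> \<le> (1 - c) * exp 0 + c * exp d"
    using convex_onD[OF exp_convex, of c 0 d] c by simp
  finally have E: "exp (c * d) \<le> (1 - c) + c * exp d" by simp
  have eq: "(1 - c) + c * exp d = (1 + exp (-z)) / (1 + exp (- (z+d)))"
  proof -
    have A: "exp z > 0" "exp d > 0" by auto
    have vv: "v = 1 / (exp z * exp d)"
    proof -
      have "exp (- (z + d)) * (exp z * exp d) = 1" by (simp add: exp_add[symmetric])
      thus ?thesis unfolding v_def by (simp add: field_simps)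
    qed
    have e1: "exp (-z) = 1 / exp z" "exp (- (z+d)) = 1 / (exp z * exp d)" unfolding exp_minus exp_add by (simp_all add: field_simps)
    show ?thesis unfolding c_def e1 vv using aux_frac[OF A] by simp
  qed
  have "c * d \<le> ln ((1 + exp (-z)) / (1 + exp (- (z+d))))"
    using E eq by (subst ln_ge_iff) (auto simp: add_pos_pos)
  also have "\<dots> = ll z - ll (z + d)"
    by (simp add: ll_def ln_divide_pos add_pos_pos)
  finally have "c * d \<le> ll z - ll (z + d)" .
  moreover have "c = gg (z + d)"
    unfolding gg_alt c_def v_def by (rule refl)
  ultimately show ?thesis by (simp add: mult.commute)
qed

lemma ll_shift: assumes "0 \<le> z" "0 \<le> d" shows "ll (z + d) * (1 + d / 2) \<le> ll z"
proof -
  have "ll (z + d) / 2 \<le> gg (z + d)" using assms by (intro gg_ge_ll_half) auto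
  hence "d * (ll (z + d) / 2) \<le> d * gg (z + d)" using assms by (intro mult_left_mono) auto
  with ll_drop[OF assms(2), of z] show ?thesis by (simp add: algebra_simps)
qed

lemma ln2_ge_half: "1/2 \<le> ln (2::real)"
proof -
  have "exp (1/2::real) \<le> 2" using exp_bound_half[of "1/2::real"] by simp
  thus ?thesis by (subst ln_ge_iff) auto
qed

lemma exp_cube_lb: assumes "0 \<le> x" shows "(x/3)^3 \<le> exp (x::real)"
proof -
  have "x/3 \<le> exp (x/3)" using exp_ge_add_one_self[of "x/3"] by linarith
  hence "(x/3)^3 \<le> (exp (x/3))^3" using assms by (intro power_mono) auto
  also have "\<dots> = exp x" by (simp add: exp_of_nat_mult[symmetric])
  finally show ?thesis .
qed

lemma key_consts:
  fixes \<gamma> \<eta> :: real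
  assumes g: "0 < \<gamma>" "\<gamma> \<le> 1" and e1: "1 \<le> \<eta>" and e: "32 / \<gamma>^2 * ln (256 / \<gamma>^2) \<le> \<eta>"
  shows "ln (8 * \<eta>) \<le> \<eta> * \<gamma>^2 / 16"
    and "\<eta>^2 * exp (- (\<eta> * \<gamma>^2) / 2) \<le> \<gamma>^2 / 100"
proof -
  define s where "s = \<eta> * \<gamma>^2"
  define L where "L = ln (256 / \<gamma>^2)"
  have g2: "0 < \<gamma>^2" "\<gamma>^2 \<le> 1" using g by (auto simp: power_le_one)
  have s_pos: "0 < s" using g2 e1 by (simp add: s_def)
  have "ln 256 \<le> L" unfolding L_def using g2 by (subst ln_le_cancel_iff) (auto simp: field_simps)
  moreover have "ln (256::real) = 8 * ln 2"
  proof -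
    have "ln ((2::real)^8) = real 8 * ln 2" by (rule ln_realpow)
    thus ?thesis by simp
  qed
  ultimately have L4: "4 \<le> L" using ln2_ge_half by linarith
  have sL: "32 * L \<le> s"
    using e g2 unfolding s_def L_def by (simp add: field_simps)
  have eta_eq: "\<eta> = s / \<gamma>^2" using g2 by (simp add: s_def)
  show "ln (8 * \<eta>) \<le> \<eta> * \<gamma>^2 / 16"
  proof -
    have "8 * \<eta> = (s / 32) * (256 / \<gamma>^2)" using eta_eq by (simp add: field_simps)
    hence "ln (8 * \<eta>) = ln ((s / 32) * (256 / \<gamma>^2))" by (simp only:)
    also have "\<dots> = ln (s/32) + L" unfolding L_def using s_pos g2 by (intro ln_mult_pos) auto
    also have "ln (s/32) \<le> s/32" using ln_le_minus_one[of "s/32"] s_pos by simp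
    finally show ?thesis using sL unfolding s_def by simp
  qed
  show "\<eta>^2 * exp (- (\<eta> * \<gamma>^2) / 2) \<le> \<gamma>^2 / 100"
  proof -
    have s128: "128 \<le> s" using sL L4 by linarith
    have A: "exp (- (\<eta> * \<gamma>^2) / 2) = exp (- s/4) * exp (- s/4)"
      unfolding s_def by (simp add: exp_add[symmetric])
    have "exp (- s/4) \<le> exp (- 8 * L)" using sL by simp
    also have "exp (- 8 * L) = (\<gamma>^2 / 256) ^ 8"
    proof -
      have "exp (- 8 * L) = inverse (exp L) ^ 8"
        by (simp add: exp_minus[symmetric] exp_of_nat_mult[symmetric] mult.commute)
      also have "exp L = 256 / \<gamma>^2" unfolding L_def using g2 by simp
      finally show ?thesis by (simp add: field_simps)
    qed
    finally have B: "exp (- s/4) \<le> (\<gamma>^2 / 256) ^ 8" .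
    have "(\<gamma>^2/256)^8 \<le> \<gamma>^6 / 256^8"
    proof -
      have "(\<gamma>^2)^8 \<le> \<gamma>^6" using g by (simp add: power_mult[symmetric] power_decreasing)
      thus ?thesis by (simp add: power_divide divide_right_mono)
    qed
    with B have B2: "exp (- s/4) \<le> \<gamma>^6 / 256^8" by linarith
    have C: "s^2 * exp (- s/4) \<le> 1728 / s"
    proof -
      have "(s/12)^3 \<le> exp (s/4)" using exp_cube_lb[of "s/4"] s_pos by simp
      hence "s^3 / 1728 \<le> exp (s/4)" by (simp add: power_divide)
      hence "s^3 \<le> 1728 * exp (s/4)" by simp
      moreover have "exp (- s/4) * exp (s/4) = 1" by (simp add: exp_add[symmetric])
      ultimately have "s^3 * exp (- s/4) \<le> 1728 * exp (s/4) * exp (- s/4)"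
        by (intro mult_right_mono) auto
      also have "\<dots> = 1728" using \<open>exp (- s/4) * exp (s/4) = 1\<close> by (simp add: mult.assoc mult.commute)
      finally have "s^3 * exp (- s/4) \<le> 1728" .
      hence "s * (s^2 * exp (- s/4)) \<le> 1728" by (simp add: power3_eq_cube power2_eq_square algebra_simps)
      thus ?thesis using s_pos by (simp add: field_simps)
    qed
    have e2: "\<eta>^2 = s^2 / \<gamma>^4" using eta_eq by (simp add: power_divide power_mult[symmetric])
    have "\<eta>^2 * exp (- (\<eta> * \<gamma>^2) / 2) = s^2 / \<gamma>^4 * (exp (- s/4) * exp (- s/4))"
      by (simp only: A e2)
    also have "\<dots> = (s^2 * exp (- s/4)) * exp (- s/4) / \<gamma>^4" by simp
    also have "\<dots> \<le> (1728 / s) * (\<gamma>^6 / 256^8) / \<gamma>^4"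
      using C B2 g s_pos by (intro divide_right_mono mult_mono) auto
    also have "\<dots> = (1728 / s) / 256^8 * \<gamma>^2"
    proof -
      have c: "\<gamma>^2 \<noteq> 0" using g by simp
      have "\<gamma>^6 = (\<gamma>^2)^3" "\<gamma>^4 = (\<gamma>^2)^2" by (simp_all flip: power_mult)
      moreover have "\<And>A K c::real. c \<noteq> 0 \<Longrightarrow> A * (c^3 / K) / c^2 = A / K * c"
        by (simp add: field_simps power2_eq_square power3_eq_cube)
      ultimately show ?thesis using c by metis
    qed
    also have "\<dots> \<le> \<gamma>^2 / 100"
    proof -
      have "(1728 / s) / 256^8 \<le> 1/100" using s128 by (simp add: field_simps)
      hence "(1728 / s) / 256^8 * \<gamma>^2 \<le> 1/100 * \<gamma>^2" using g2 by (intro mult_right_mono) auto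
      thus ?thesis by simp
    qed
    finally show ?thesis .
  qed
qed

locale dyn =
  fixes n :: nat and a b :: "nat \<Rightarrow> real" and \<eta> \<gamma> :: real and p q :: "nat \<Rightarrow> real"
  assumes n_pos: "1 \<le> n"
    and a_ge: "\<And>i. i < n \<Longrightarrow> \<gamma> \<le> a i"
    and ab_le: "\<And>i. i < n \<Longrightarrow> (a i)^2 + (b i)^2 \<le> 1"
    and gpos: "0 < \<gamma>" and gle1: "\<gamma> \<le> 1"
    and eta_n: "real n \<le> \<eta>"
    and eta_big: "32 / \<gamma>^2 * ln (256 / \<gamma>^2) \<le> \<eta>"
    and p0: "p 0 = 0" and q0: "q 0 = 0"
    and p_step: "\<And>k. p (Suc k) = p k + \<eta> / n * (\<Sum>i<n. gg (a i * p k + b i * q k) * a i)"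
    and q_step: "\<And>k. q (Suc k) = q k + \<eta> / n * (\<Sum>i<n. gg (a i * p k + b i * q k) * b i)"
begin

definition z where "z i k = a i * p k + b i * q k"
definition F where "F k = (\<Sum>i<n. ll (z i k)) / n"
definition nd where "nd k \<longleftrightarrow> 1 / (8 * \<eta>) < F k"
definition eps where "eps = exp (- (\<eta> * \<gamma>^2) / 2)"
definition Os where "Os = {i. i < n \<and> b i < 0}"
definition Ps where "Ps = {i. i < n \<and> 0 \<le> b i}"
definition pull where "pull k = \<eta> / n * (\<Sum>i\<in>Os. gg (z i k) * (- b i))"
definition same where "same k = \<eta> / n * (\<Sum>i\<in>Ps. gg (z i k) * b i)"
definition GO where "GO k = (\<Sum>i\<in>Os. gg (z i k)) / n"
definition FO where "FO k = (\<Sum>i\<in>Os. ll (z i k)) / n"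

lemma npos': "0 < real n" using n_pos by simp
lemma eta1: "1 \<le> \<eta>" using n_pos eta_n by linarith
lemma eta_pos: "0 < \<eta>" using eta1 by simp
lemma g2: "0 < \<gamma>^2" "\<gamma>^2 \<le> 1" using gpos gle1 by (auto simp: power_le_one)
lemma ln8: "ln (8 * \<eta>) \<le> \<eta> * \<gamma>^2 / 16" using key_consts(1)[OF gpos gle1 eta1 eta_big] .
lemma eps_small: "\<eta>^2 * eps \<le> \<gamma>^2 / 100" using key_consts(2)[OF gpos gle1 eta1 eta_big] by (simp add: eps_def)
lemma eps_pos: "0 < eps" by (simp add: eps_def)
lemma eta_eps: "\<eta> * eps \<le> \<gamma>^2 / 100"
proof -
  have "\<eta> * eps \<le> \<eta> * (\<eta> * eps)" using eta1 eps_pos by (intro mult_right_mono[of 1 \<eta>, simplified]) auto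
  thus ?thesis using eps_small by (simp add: power2_eq_square mult.assoc)
qed

lemma a_pos: "i < n \<Longrightarrow> 0 < a i" using a_ge gpos by force
lemma a_le1: "i < n \<Longrightarrow> a i \<le> 1"
proof -
  assume "i < n" hence "(a i)^2 \<le> 1" using ab_le[of i] zero_le_power2[of "b i"] by linarith
  hence "(a i)^2 \<le> 1^2" by simp
  hence "\<bar>a i\<bar> \<le> \<bar>1\<bar>" using abs_le_square_iff by blast
  thus ?thesis by simp
qed
lemma b_abs: "i < n \<Longrightarrow> \<bar>b i\<bar> \<le> 1"
proof -
  assume "i < n" hence "(b i)^2 \<le> 1" using ab_le[of i] zero_le_power2[of "a i"] by linarith
  hence "(b i)^2 \<le> 1^2" by simp
  hence "\<bar>b i\<bar> \<le> \<bar>1\<bar>" using abs_le_square_iff by blast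
  thus ?thesis by simp
qed
lemma cs: assumes "i < n" "j < n" shows "\<bar>a i * a j + b i * b j\<bar> \<le> 1"
proof -
  have "(a i * a j + b i * b j)^2 \<le> ((a i)^2 + (b i)^2) * ((a j)^2 + (b j)^2)"
  proof -
    have "((a i)^2 + (b i)^2) * ((a j)^2 + (b j)^2) - (a i * a j + b i * b j)^2 = (a i * b j - a j * b i)^2"
      by (simp add: power2_eq_square algebra_simps)
    thus ?thesis using zero_le_power2[of "a i * b j - a j * b i"] by linarith
  qed
  also have "\<dots> \<le> 1 * 1" using ab_le[OF assms(1)] ab_le[OF assms(2)]
    by (intro mult_mono) (auto intro: add_nonneg_nonneg)
  finally have "(a i * a j + b i * b j)^2 \<le> 1^2" by simp
  hence "\<bar>a i * a j + b i * b j\<bar> \<le> \<bar>1\<bar>" using abs_le_square_iff by blast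
  thus ?thesis by simp
qed
lemma a_ge_gb: "i < n \<Longrightarrow> \<gamma> * \<bar>b i\<bar> \<le> a i"
  using a_ge[of i] b_abs[of i] gpos mult_left_le[of "\<bar>b i\<bar>" \<gamma>] by linarith

lemma gg0: "gg 0 = 1/2" by (simp add: gg_def)

lemma sum_split: fixes f :: "nat \<Rightarrow> real" assumes "\<And>i. i < n \<Longrightarrow> b i = 0 \<Longrightarrow> f i = 0"
  shows "(\<Sum>i<n. f i) = (\<Sum>i\<in>Os. f i) + (\<Sum>i\<in>Ps. f i)"
proof -
  have "Os \<union> Ps = {..<n}" by (auto simp: Os_def Ps_def)
  moreover have "Os \<inter> Ps = {}" by (auto simp: Os_def Ps_def)
  moreover have "finite Os" "finite Ps" by (auto simp: Os_def Ps_def)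
  ultimately show ?thesis by (metis sum.union_disjoint)
qed

lemma q_step': "q (Suc k) = q k + same k - pull k"
proof -
  have "(\<Sum>i<n. gg (z i k) * b i) = (\<Sum>i\<in>Os. gg (z i k) * b i) + (\<Sum>i\<in>Ps. gg (z i k) * b i)"
    by (rule sum_split) simp
  moreover have "(\<Sum>i\<in>Os. gg (z i k) * b i) = - (\<Sum>i\<in>Os. gg (z i k) * (- b i))"
    by (simp add: sum_negf)
  ultimately show ?thesis using q_step[of k] unfolding same_def pull_def z_def by (simp add: algebra_simps)
qed

lemma p_mono1: "p k \<le> p (Suc k)"
proof -
  have "0 \<le> (\<Sum>i<n. gg (a i * p k + b i * q k) * a i)"
    by (intro sum_nonneg mult_nonneg_nonneg) (auto intro: less_imp_le gg_pos a_pos)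
  thus ?thesis using p_step[of k] eta_pos npos' by simp
qed
lemma p_mono: "k \<le> k' \<Longrightarrow> p k \<le> p k'"
  by (induction k' rule: dec_induct) (auto intro: order_trans p_mono1)

lemma p1: "\<eta> * \<gamma> / 2 \<le> p 1"
proof -
  have e: "p 1 = \<eta> / n * ((\<Sum>i<n. a i) / 2)"
    using p_step[of 0] by (simp add: p0 q0 gg0 sum_divide_distrib)
  have "real n * \<gamma> \<le> (\<Sum>i<n. a i)"
    using sum_mono[of "{..<n}" "\<lambda>_. \<gamma>" a] a_ge by simp
  hence "\<eta> / n * (real n * \<gamma> / 2) \<le> \<eta> / n * ((\<Sum>i<n. a i) / 2)"
    using eta_pos npos' by (intro mult_left_mono) auto
  thus ?thesis using e npos' by simp
qed
lemma p_ge: "1 \<le> k \<Longrightarrow> \<eta> * \<gamma> / 2 \<le> p k"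
  using p1 p_mono[of 1 k] by simp

lemma q1: "\<bar>q 1\<bar> \<le> \<eta> / 2"
proof -
  have "\<bar>\<Sum>i<n. b i\<bar> \<le> (\<Sum>i<n. \<bar>b i\<bar>)" by (rule sum_abs)
  also have "\<dots> \<le> (\<Sum>i<n. 1)" by (intro sum_mono b_abs) simp
  finally have B: "\<bar>\<Sum>i<n. b i\<bar> \<le> n" by simp
  have e: "q 1 = \<eta> / n * ((\<Sum>i<n. b i) / 2)"
    using q_step[of 0] by (simp add: p0 q0 gg0 sum_divide_distrib)
  have "\<bar>q 1\<bar> = \<eta> / n * (\<bar>\<Sum>i<n. b i\<bar> / 2)" unfolding e using eta_pos npos' by (simp add: abs_mult)
  also have "\<dots> \<le> \<eta> / n * (real n / 2)" using B eta_pos npos' by (intro mult_left_mono) auto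
  finally show ?thesis using npos' by simp
qed

end

context dyn begin

lemma z_step: "z i (Suc k) = z i k + \<eta> / n * (\<Sum>j<n. gg (z j k) * (a j * a i + b j * b i))"
proof -
  have "z i (Suc k) = a i * p k + b i * q k + \<eta> / n * (a i * (\<Sum>j<n. gg (z j k) * a j) + b i * (\<Sum>j<n. gg (z j k) * b j))"
    unfolding z_def p_step q_step by (simp add: algebra_simps z_def[symmetric])
  also have "a i * (\<Sum>j<n. gg (z j k) * a j) + b i * (\<Sum>j<n. gg (z j k) * b j) = (\<Sum>j<n. gg (z j k) * (a j * a i + b j * b i))"
    by (simp add: sum_distrib_left sum.distrib[symmetric] algebra_simps)
  finally show ?thesis by (simp add: z_def)
qed

lemma same_side: assumes "1 \<le> k" "i < n" "0 \<le> b i * q k"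
  shows "\<gamma> * p k \<le> z i k" "\<eta> * \<gamma>^2 / 2 \<le> z i k" "gg (z i k) \<le> eps" "ll (z i k) \<le> eps"
proof -
  have pk: "\<eta> * \<gamma> / 2 \<le> p k" using p_ge[OF assms(1)] .
  hence "0 \<le> p k" using eta_pos gpos by (smt (verit) mult_pos_pos half_gt_zero)
  hence "\<gamma> * p k \<le> a i * p k" using a_ge[OF assms(2)] by (intro mult_right_mono) auto
  thus z1: "\<gamma> * p k \<le> z i k" using assms(3) by (simp add: z_def)
  have "\<gamma> * (\<eta> * \<gamma> / 2) \<le> \<gamma> * p k" using pk gpos by (intro mult_left_mono) auto
  thus z2: "\<eta> * \<gamma>^2 / 2 \<le> z i k" using z1 by (simp add: power2_eq_square algebra_simps)
  have "exp (- z i k) \<le> eps" unfolding eps_def using z2 by simp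
  thus "gg (z i k) \<le> eps" "ll (z i k) \<le> eps" using gg_le_exp[of "z i k"] ll_le_exp[of "z i k"] by linarith+
qed

lemma done_check: assumes "1 \<le> k" "\<bar>q k\<bar> \<le> \<gamma> * p k / 2" shows "\<not> nd k"
proof -
  have pk: "\<eta> * \<gamma> / 2 \<le> p k" using p_ge[OF assms(1)] .
  have pk0: "0 \<le> p k" using pk eta_pos gpos by (smt (verit) mult_pos_pos half_gt_zero)
  have "ll (z i k) \<le> 1 / (8 * \<eta>)" if i: "i < n" for i
  proof -
    have "\<bar>b i * q k\<bar> \<le> 1 * (\<gamma> * p k / 2)" unfolding abs_mult
      using b_abs[OF i] assms(2) by (intro mult_mono) auto
    hence "z i k \<ge> a i * p k - \<gamma> * p k / 2" unfolding z_def by linarith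
    moreover have "\<gamma> * p k \<le> a i * p k" using a_ge[OF i] pk0 by (intro mult_right_mono) auto
    ultimately have "z i k \<ge> \<gamma> * p k / 2" by linarith
    moreover have "\<gamma> * (\<eta> * \<gamma> / 2) \<le> \<gamma> * p k" using pk gpos by (intro mult_left_mono) auto
    ultimately have "z i k \<ge> \<eta> * \<gamma>^2 / 4" by (simp add: power2_eq_square algebra_simps)
    moreover have "\<eta> * \<gamma>^2 / 16 \<le> \<eta> * \<gamma>^2 / 4" using eta_pos g2 by simp
    ultimately have "ln (8 * \<eta>) \<le> z i k" using ln8 by linarith
    hence "exp (- z i k) \<le> exp (- ln (8 * \<eta>))" by simp
    also have "\<dots> = 1 / (8 * \<eta>)" using eta_pos by (simp add: exp_minus inverse_eq_divide)
    finally show ?thesis using ll_le_exp[of "z i k"] by linarith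
  qed
  hence "(\<Sum>i<n. ll (z i k)) \<le> (\<Sum>i<n. 1 / (8 * \<eta>))" by (intro sum_mono) auto
  hence "(\<Sum>i<n. ll (z i k)) \<le> n * (1 / (8 * \<eta>))" by simp
  hence "F k \<le> 1 / (8 * \<eta>)" unfolding F_def using npos' by (simp add: field_simps)
  thus ?thesis unfolding nd_def by simp
qed

lemma nd_q: "1 \<le> k \<Longrightarrow> nd k \<Longrightarrow> \<gamma> * p k / 2 < \<bar>q k\<bar>"
  using done_check by force

lemma nd_p: assumes "1 \<le> k" "nd k" "\<bar>q k\<bar> \<le> \<eta>" shows "p k < 2 * \<eta> / \<gamma>"
proof -
  have "\<gamma> * p k < 2 * \<eta>" using nd_q[OF assms(1,2)] assms(3) by linarith
  thus ?thesis using gpos by (simp add: field_simps)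
qed

lemma witness: assumes "nd k" shows "\<exists>i<n. z i k < ln (8 * \<eta>)"
proof (rule ccontr)
  assume H: "\<not> (\<exists>i<n. z i k < ln (8 * \<eta>))"
  hence "ll (z i k) \<le> 1 / (8 * \<eta>)" if "i < n" for i
  proof -
    have "ln (8 * \<eta>) \<le> z i k" using H that by force
    hence "exp (- z i k) \<le> exp (- ln (8 * \<eta>))" by simp
    also have "\<dots> = 1 / (8 * \<eta>)" using eta_pos by (simp add: exp_minus inverse_eq_divide)
    finally show ?thesis using ll_le_exp[of "z i k"] by linarith
  qed
  hence "(\<Sum>i<n. ll (z i k)) \<le> (\<Sum>i<n. 1 / (8 * \<eta>))" by (intro sum_mono) auto
  hence "(\<Sum>i<n. ll (z i k)) \<le> n * (1 / (8 * \<eta>))" by simp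
  hence "F k \<le> 1 / (8 * \<eta>)" unfolding F_def using npos' by (simp add: field_simps)
  thus False using assms unfolding nd_def by simp
qed

end

context dyn begin

lemma finOs: "finite Os" and finPs: "finite Ps" by (auto simp: Os_def Ps_def)
lemma Os_lt: "i \<in> Os \<Longrightarrow> i < n" and Os_b: "i \<in> Os \<Longrightarrow> b i < 0" by (auto simp: Os_def)
lemma Ps_lt: "i \<in> Ps \<Longrightarrow> i < n" and Ps_b: "i \<in> Ps \<Longrightarrow> 0 \<le> b i" by (auto simp: Ps_def)
lemma card_Os: "card Os \<le> n" and card_Ps: "card Ps \<le> n"
  by (auto simp: Os_def Ps_def intro!: card_mono[of "{..<n}", simplified])

lemma p_nonneg: "0 \<le> p k" using p_mono[of 0 k] p0 by simp

lemma witness_O: assumes "1 \<le> k" "0 < q k" "i < n" "z i k < ln (8 * \<eta>)" shows "i \<in> Os"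
proof (rule ccontr)
  assume "i \<notin> Os"
  hence "0 \<le> b i" using assms(3) by (auto simp: Os_def)
  hence "\<eta> * \<gamma>^2 / 2 \<le> z i k" using same_side(2)[OF assms(1,3)] assms(2) by simp
  moreover have "\<eta> * \<gamma>^2 / 16 \<le> \<eta> * \<gamma>^2 / 2" using eta_pos g2 by simp
  ultimately show False using ln8 assms(4) by linarith
qed

lemma same_nonneg: "0 \<le> same k"
  unfolding same_def using eta_pos npos'
  by (intro mult_nonneg_nonneg sum_nonneg) (auto intro: less_imp_le gg_pos simp: Ps_def)

lemma same_le: assumes "1 \<le> k" "0 < q k" shows "same k \<le> \<eta> * eps"
proof -
  have "(\<Sum>i\<in>Ps. gg (z i k) * b i) \<le> (\<Sum>i\<in>Ps. eps)"
  proof (intro sum_mono)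
    fix i assume i: "i \<in> Ps"
    have "gg (z i k) \<le> eps" using same_side(3)[OF assms(1) Ps_lt[OF i]] Ps_b[OF i] assms(2) by simp
    moreover have "b i \<le> 1" using b_abs[OF Ps_lt[OF i]] by simp
    ultimately show "gg (z i k) * b i \<le> eps"
      using Ps_b[OF i] gg_pos[of "z i k"] eps_pos by (smt (verit) mult_mono mult_cancel_left1)
  qed
  also have "\<dots> \<le> n * eps" using card_Ps eps_pos by (simp add: mult_right_mono)
  finally show ?thesis unfolding same_def using eta_pos npos' by (simp add: field_simps mult_left_mono)
qed

lemma pull_nonneg: "0 \<le> pull k"
  unfolding pull_def using eta_pos npos'
  by (intro mult_nonneg_nonneg sum_nonneg) (auto intro: less_imp_le gg_pos simp: Os_def)

lemma pull_le: "pull k \<le> \<eta>"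
proof -
  have "(\<Sum>i\<in>Os. gg (z i k) * (- b i)) \<le> (\<Sum>i\<in>Os. 1)"
  proof (intro sum_mono)
    fix i assume i: "i \<in> Os"
    have "- b i \<le> 1" using b_abs[OF Os_lt[OF i]] by simp
    thus "gg (z i k) * (- b i) \<le> 1"
      using Os_b[OF i] gg_pos[of "z i k"] gg_le1[of "z i k"] by (smt (verit) mult_mono mult_cancel_left1)
  qed
  also have "\<dots> \<le> n" using card_Os by simp
  finally show ?thesis unfolding pull_def using eta_pos npos' by (simp add: field_simps mult_left_mono)
qed

lemma dp_ge: "\<gamma> * pull k \<le> p (Suc k) - p k"
proof -
  have "\<gamma> * (\<Sum>i\<in>Os. gg (z i k) * (- b i)) = (\<Sum>i\<in>Os. gg (z i k) * (\<gamma> * \<bar>b i\<bar>))"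
    by (simp add: sum_distrib_left Os_def algebra_simps)
  also have "\<dots> \<le> (\<Sum>i\<in>Os. gg (z i k) * a i)"
    by (intro sum_mono mult_left_mono a_ge_gb) (auto intro: less_imp_le gg_pos simp: Os_def)
  also have "\<dots> \<le> (\<Sum>i<n. gg (z i k) * a i)"
    by (intro sum_mono2) (auto simp: Os_def intro!: mult_nonneg_nonneg less_imp_le[OF gg_pos] less_imp_le[OF a_pos])
  finally have "\<gamma> * (\<Sum>i\<in>Os. gg (z i k) * (- b i)) \<le> (\<Sum>i<n. gg (z i k) * a i)" .
  hence "\<eta> / n * (\<gamma> * (\<Sum>i\<in>Os. gg (z i k) * (- b i))) \<le> \<eta> / n * (\<Sum>i<n. gg (z i k) * a i)"
    using eta_pos npos' by (intro mult_left_mono) auto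
  thus ?thesis unfolding pull_def using p_step[of k] by (simp add: z_def algebra_simps)
qed

lemma pull_ge_same: assumes "1 \<le> k" "0 < q k" "q k \<le> \<eta>" "nd k" shows "same k \<le> pull k"
proof -
  obtain i where i: "i < n" "z i k < ln (8 * \<eta>)" using witness[OF assms(4)] by blast
  have iO: "i \<in> Os" using witness_O[OF assms(1,2) i] .
  have pk: "\<eta> * \<gamma> / 2 \<le> p k" using p_ge[OF assms(1)] .
  have gp: "\<eta> * \<gamma>^2 / 2 \<le> \<gamma> * p k"
    using mult_left_mono[OF pk, of \<gamma>] gpos by (simp add: power2_eq_square algebra_simps)
  have "a i * p k + b i * q k < ln (8 * \<eta>)" using i unfolding z_def by simp
  moreover have "\<gamma> * p k \<le> a i * p k"
    using a_ge[OF i(1)] p_nonneg by (intro mult_right_mono) auto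
  moreover have "ln (8 * \<eta>) \<le> \<gamma> * p k / 2" using ln8 gp mult_pos_pos[OF eta_pos g2(1)] by linarith
  ultimately have "\<gamma> * p k / 2 < (- b i) * q k" by linarith
  also have "\<dots> \<le> (- b i) * \<eta>" using assms(3) Os_b[OF iO] by (intro mult_left_mono) auto
  finally have "\<gamma> * p k / 2 < (- b i) * \<eta>" .
  hence "\<eta> * \<gamma>^2 / 4 < (- b i) * \<eta>" using gp by linarith
  hence "\<eta> * (\<gamma>^2 / 4) < \<eta> * (- b i)" by (simp add: algebra_simps)
  hence bi: "\<gamma>^2 / 4 < - b i" using eta_pos mult_less_cancel_left_pos by blast
  have gi: "1 / (9 * \<eta>) \<le> gg (z i k)"
  proof -
    have "1 / (1 + exp (ln (8 * \<eta>))) \<le> gg (z i k)" using gg_ge_at[of "z i k" "ln (8*\<eta>)"] i by simp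
    moreover have "1 / (9 * \<eta>) \<le> 1 / (1 + exp (ln (8 * \<eta>)))" using eta1 by (simp add: field_simps)
    ultimately show ?thesis by linarith
  qed
  have "gg (z i k) * (- b i) \<le> (\<Sum>j\<in>Os. gg (z j k) * (- b j))"
    using iO finOs by (intro member_le_sum) (auto simp: Os_def intro!: mult_nonneg_nonpos less_imp_le[OF gg_pos])
  moreover have "1 / (9 * \<eta>) * (\<gamma>^2 / 4) \<le> gg (z i k) * (- b i)"
    using gi bi eta_pos g2 gg_pos[of "z i k"] by (intro mult_mono) auto
  ultimately have "\<gamma>^2 / (36 * \<eta>) \<le> (\<Sum>j\<in>Os. gg (z j k) * (- b j))" by (simp add: field_simps)
  hence "\<eta> / n * (\<gamma>^2 / (36 * \<eta>)) \<le> pull k" unfolding pull_def using eta_pos npos' by (intro mult_left_mono) auto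
  hence P: "\<gamma>^2 / (36 * n) \<le> pull k" using eta_pos by (simp add: field_simps)
  have "\<eta> * eps * \<eta> \<le> \<gamma>^2 / 100" using eps_small by (simp add: power2_eq_square algebra_simps)
  hence "\<eta> * eps \<le> \<gamma>^2 / (100 * \<eta>)" using eta_pos by (simp add: field_simps)
  also have "\<dots> \<le> \<gamma>^2 / (36 * n)" using eta_n npos' g2 by (intro divide_left_mono) auto
  finally show ?thesis using same_le[OF assms(1,2)] P by linarith
qed

end

context dyn begin

lemma sum_split2: fixes f :: "nat \<Rightarrow> real"
  shows "(\<Sum>i<n. f i) = (\<Sum>i\<in>Os. f i) + (\<Sum>i\<in>Ps. f i)"
proof -
  have "Os \<union> Ps = {..<n}" by (auto simp: Os_def Ps_def)
  moreover have "Os \<inter> Ps = {}" by (auto simp: Os_def Ps_def)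
  ultimately show ?thesis using finOs finPs by (metis sum.union_disjoint)
qed

lemma F_split: assumes "1 \<le> k" "0 < q k" shows "F k \<le> FO k + eps"
proof -
  have "(\<Sum>i\<in>Ps. ll (z i k)) \<le> (\<Sum>i\<in>Ps. eps)"
    using same_side(4)[OF assms(1)] assms(2) by (intro sum_mono) (auto simp: Ps_def)
  also have "\<dots> \<le> n * eps" using card_Ps eps_pos by (simp add: mult_right_mono)
  finally have "(\<Sum>i\<in>Ps. ll (z i k)) / n \<le> eps" using npos' by (simp add: field_simps)
  thus ?thesis unfolding F_def FO_def sum_split2[of "\<lambda>i. ll (z i k)"] by (simp add: add_divide_distrib)
qed

lemma eps_lt: "eps \<le> 1 / (100 * \<eta>)"
proof -
  have "\<eta> * eps \<le> 1 / 100" using eta_eps g2 by linarith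
  thus ?thesis using eta_pos by (simp add: field_simps)
qed

lemma nd_FO: assumes "1 \<le> k" "0 < q k" "nd k" shows "1 / (8 * \<eta>) - eps < FO k"
  using F_split[OF assms(1,2)] assms(3) unfolding nd_def by linarith

lemma FO_pos: assumes "1 \<le> k" "0 < q k" "nd k" shows "0 < FO k"
proof -
  have "1 / (100 * \<eta>) \<le> 1 / (8 * \<eta>)" using eta_pos by (intro divide_left_mono) auto
  thus ?thesis using nd_FO[OF assms] eps_lt by linarith
qed

lemma GO_ge_half: assumes "i \<in> Os" "z i k \<le> 0" shows "1 / (2 * n) \<le> GO k"
proof -
  have "gg (z i k) \<le> (\<Sum>j\<in>Os. gg (z j k))"
    using assms(1) finOs by (intro member_le_sum) (auto intro: less_imp_le[OF gg_pos])
  thus ?thesis unfolding GO_def using gg_ge_half[OF assms(2)] npos' by (simp add: field_simps)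
qed

lemma GO_ge_FO: assumes "\<And>i. i \<in> Os \<Longrightarrow> 0 \<le> z i k" shows "FO k / 2 \<le> GO k"
proof -
  have "(\<Sum>j\<in>Os. ll (z j k) / 2) \<le> (\<Sum>j\<in>Os. gg (z j k))"
    by (intro sum_mono gg_ge_ll_half assms)
  thus ?thesis unfolding GO_def FO_def using npos' by (simp add: sum_divide_distrib[symmetric] field_simps)
qed

lemma z_inc: assumes "1 \<le> k" "0 < q k" "i \<in> Os"
  shows "z i k + \<eta> * \<gamma>^2 * GO k - \<eta> * eps \<le> z i (Suc k)"
proof -
  have i: "i < n" "b i < 0" using assms(3) by (auto simp: Os_def)
  have A: "\<gamma>^2 * (\<Sum>j\<in>Os. gg (z j k)) \<le> (\<Sum>j\<in>Os. gg (z j k) * (a j * a i + b j * b i))"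
    unfolding sum_distrib_left
  proof (intro sum_mono)
    fix j assume j: "j \<in> Os"
    have "\<gamma> * \<gamma> \<le> a j * a i" using a_ge[of j] a_ge[OF i(1)] gpos j by (intro mult_mono) (auto simp: Os_def)
    moreover have "0 \<le> b j * b i" using i j by (auto simp: Os_def zero_le_mult_iff)
    ultimately have "\<gamma>^2 \<le> a j * a i + b j * b i" by (simp add: power2_eq_square)
    thus "\<gamma>^2 * gg (z j k) \<le> gg (z j k) * (a j * a i + b j * b i)"
      using gg_pos[of "z j k"] by (simp add: mult.commute mult_left_mono)
  qed
  have B: "- (n * eps) \<le> (\<Sum>j\<in>Ps. gg (z j k) * (a j * a i + b j * b i))"
  proof -
    have "(\<Sum>j\<in>Ps. - eps) \<le> (\<Sum>j\<in>Ps. gg (z j k) * (a j * a i + b j * b i))"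
    proof (intro sum_mono)
      fix j assume j: "j \<in> Ps"
      have ge: "gg (z j k) \<le> eps" using same_side(3)[OF assms(1) Ps_lt[OF j]] Ps_b[OF j] assms(2) by simp
      have c: "\<bar>a j * a i + b j * b i\<bar> \<le> 1" using cs[OF Ps_lt[OF j] i(1)] .
      have "\<bar>gg (z j k) * (a j * a i + b j * b i)\<bar> \<le> eps * 1"
        unfolding abs_mult using ge c gg_pos[of "z j k"] by (intro mult_mono) auto
      thus "- eps \<le> gg (z j k) * (a j * a i + b j * b i)" by linarith
    qed
    moreover have "- (n * eps) \<le> (\<Sum>j\<in>Ps. - eps)" using card_Ps eps_pos by (simp add: mult_right_mono)
    ultimately show ?thesis by linarith
  qed
  have "\<gamma>^2 * (n * GO k) - n * eps \<le> (\<Sum>j<n. gg (z j k) * (a j * a i + b j * b i))"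
    unfolding sum_split2[of "\<lambda>j. gg (z j k) * (a j * a i + b j * b i)"] GO_def using A B npos' by simp
  hence "\<eta> / n * (\<gamma>^2 * (n * GO k) - n * eps) \<le> \<eta> / n * (\<Sum>j<n. gg (z j k) * (a j * a i + b j * b i))"
    using eta_pos npos' by (intro mult_left_mono) auto
  moreover have "\<eta> / n * (\<gamma>^2 * (n * GO k) - n * eps) = \<eta> * \<gamma>^2 * GO k - \<eta> * eps"
    using npos' by (simp add: field_simps)
  ultimately show ?thesis using z_step[of i k] by linarith
qed

lemma GO_big: assumes "1 \<le> k" "0 < q k" "nd k" shows "\<eta> * eps < \<eta> * \<gamma>^2 * GO k"
proof (cases "\<exists>i\<in>Os. z i k \<le> 0")
  case True
  then obtain i where "i \<in> Os" "z i k \<le> 0" by blast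
  hence G: "1 / (2 * n) \<le> GO k" by (rule GO_ge_half)
  have "\<eta> * \<gamma>^2 * (1 / (2 * n)) \<le> \<eta> * \<gamma>^2 * GO k" using G eta_pos g2 by (intro mult_left_mono) auto
  moreover have "\<gamma>^2 / 2 \<le> \<eta> * \<gamma>^2 * (1 / (2 * n))" using eta_n npos' g2 by (simp add: field_simps mult_right_mono)
  moreover have "\<eta> * eps < \<gamma>^2 / 2" using eta_eps g2 by linarith
  ultimately show ?thesis by linarith
next
  case False
  hence "FO k / 2 \<le> GO k" by (intro GO_ge_FO) force
  moreover have "1 / (8 * \<eta>) - eps < FO k" by (rule nd_FO[OF assms])
  ultimately have "1 / (16 * \<eta>) - eps / 2 < GO k" by (simp add: field_simps)
  hence "\<eta> * \<gamma>^2 * (1 / (16 * \<eta>) - eps / 2) < \<eta> * \<gamma>^2 * GO k"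
    using eta_pos g2 by (intro mult_strict_left_mono) auto
  moreover have "\<eta> * \<gamma>^2 * (1 / (16 * \<eta>) - eps / 2) = \<gamma>^2 / 16 - \<gamma>^2 * (\<eta> * eps) / 2"
    using eta_pos by (simp add: field_simps)
  moreover have "\<gamma>^2 * (\<eta> * eps) \<le> 1 * (\<gamma>^2 / 100)" using eta_eps g2 eta_pos eps_pos by (intro mult_mono) auto
  ultimately show ?thesis using eta_eps g2 by linarith
qed

lemma z_strict: assumes "1 \<le> k" "0 < q k" "nd k" "i \<in> Os" shows "z i k < z i (Suc k)"
  using z_inc[OF assms(1,2,4)] GO_big[OF assms(1-3)] by linarith

end

context dyn begin

lemma mirror: "dyn n a (\<lambda>i. - b i) \<eta> \<gamma> p (\<lambda>k. - q k)"
proof unfold_locales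
  show "\<And>i. i < n \<Longrightarrow> (a i)^2 + (- b i)^2 \<le> 1" using ab_le by simp
  show "\<And>k. p (Suc k) = p k + \<eta> / n * (\<Sum>i<n. gg (a i * p k + - b i * - q k) * a i)" using p_step by simp
  show "\<And>k. - q (Suc k) = - q k + \<eta> / n * (\<Sum>i<n. gg (a i * p k + - b i * - q k) * - b i)"
    using q_step by (simp add: sum_negf)
qed (use n_pos a_ge gpos gle1 eta_n eta_big p0 q0 in auto)

lemma q_next_pos: assumes "1 \<le> k" "0 < q k" "q k \<le> \<eta>" "nd k" shows "\<bar>q (Suc k)\<bar> \<le> \<eta>"
proof -
  have e: "q (Suc k) = q k + same k - pull k" by (rule q_step')
  have "same k \<le> pull k" by (rule pull_ge_same[OF assms])
  moreover have "0 \<le> same k" by (rule same_nonneg)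
  moreover have "pull k \<le> \<eta>" by (rule pull_le)
  ultimately show ?thesis using e assms(2,3) by linarith
qed

lemma nd_q_nz: assumes "1 \<le> k" "nd k" shows "q k \<noteq> 0"
proof
  assume "q k = 0"
  moreover have "0 \<le> \<gamma> * p k" using mult_nonneg_nonneg[OF less_imp_le[OF gpos] p_nonneg] .
  ultimately show False using nd_q[OF assms] by simp
qed

lemma q_bound_aux: "(\<forall>j. 1 \<le> j \<and> j < k \<longrightarrow> nd j) \<longrightarrow> 1 \<le> k \<longrightarrow> \<bar>q k\<bar> \<le> \<eta>"
proof (induction k)
  case 0 show ?case by simp
next
  case (Suc k)
  show ?case
  proof (intro impI)
    assume H: "\<forall>j. 1 \<le> j \<and> j < Suc k \<longrightarrow> nd j"
    show "\<bar>q (Suc k)\<bar> \<le> \<eta>"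
    proof (cases "k = 0")
      case True thus ?thesis using q1 eta_pos by simp
    next
      case False
      hence k1: "1 \<le> k" by simp
      have ndk: "nd k" using H k1 by simp
      have qk: "\<bar>q k\<bar> \<le> \<eta>" using Suc.IH H k1 by simp
      interpret m: dyn n a "\<lambda>i. - b i" \<eta> \<gamma> p "\<lambda>k. - q k" by (rule mirror)
      have ndm: "m.nd k = nd k" for k unfolding m.nd_def nd_def m.F_def F_def m.z_def z_def by simp
      show ?thesis
      proof (cases "0 < q k")
        case True thus ?thesis using q_next_pos[OF k1 True _ ndk] qk by simp
      next
        case False
        hence "0 < - q k" using nd_q_nz[OF k1 ndk] by linarith
        thus ?thesis using m.q_next_pos[OF k1 _ _ ] qk ndm ndk by simp
      qed
    qed
  qed
qed

lemma q_bound: assumes "\<And>j. 1 \<le> j \<Longrightarrow> j < k \<Longrightarrow> nd j" "1 \<le> k" shows "\<bar>q k\<bar> \<le> \<eta>"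
  using q_bound_aux[of k] assms by blast

lemma ln_ge: fixes x y :: real assumes "0 < x" "x \<le> y" shows "1 - x / y \<le> ln (y / x)"
proof -
  have "0 < y" using assms by linarith
  hence "0 < x / y" using assms by simp
  hence "ln (x / y) \<le> x / y - 1" by (rule ln_le_minus_one)
  moreover have "ln (x / y) = - ln (y / x)" using assms by (simp add: ln_div)
  ultimately show ?thesis by linarith
qed

lemma flip_phase:
  assumes s1: "1 \<le> s" and st: "s \<le> t" and qpos: "\<And>k. s \<le> k \<Longrightarrow> k \<le> t \<Longrightarrow> 0 < q k"
    and qneg: "q (Suc t) < 0" and ndr: "\<And>k. s \<le> k \<Longrightarrow> k \<le> Suc t \<Longrightarrow> nd k"
  shows "real (Suc t - s) * \<gamma>^2 / 2 \<le> ln (p (Suc t) / p s)"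
proof -
  have zmono: "z i k \<le> z i t" if i: "i \<in> Os" and k: "s \<le> k" "k \<le> t" for i k
  proof -
    have D: "\<forall>d. k + d \<le> t \<longrightarrow> z i k \<le> z i (k + d)"
    proof
      fix d show "k + d \<le> t \<longrightarrow> z i k \<le> z i (k + d)"
      proof (induction d)
        case 0 show ?case by simp
      next
        case (Suc d)
        show ?case
        proof
          assume h: "k + Suc d \<le> t"
          have a1: "1 \<le> k + d" using s1 k by simp
          have a2: "0 < q (k + d)" using k h by (intro qpos) auto
          have a3: "nd (k + d)" using k h by (intro ndr) auto
          have "z i (k + d) < z i (Suc (k + d))" by (rule z_strict[OF a1 a2 a3 i])
          thus "z i k \<le> z i (k + Suc d)" using Suc h by simp
        qed
      qed
    qed
    have "z i k \<le> z i (k + (t - k))" using k by (intro D[rule_format]) simp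
    thus ?thesis using k by simp
  qed
  have pullmono: "pull t \<le> pull k" if k: "s \<le> k" "k \<le> t" for k
  proof -
    have "(\<Sum>i\<in>Os. gg (z i t) * (- b i)) \<le> (\<Sum>i\<in>Os. gg (z i k) * (- b i))"
      by (intro sum_mono mult_right_mono gg_antimono zmono k) (auto simp: Os_def)
    thus ?thesis unfolding pull_def using eta_pos npos' by (intro mult_left_mono) auto
  qed
  define N where "N = Suc t - s"
  have tel: "(\<Sum>k = s..t. p (Suc k) - p k) = p (Suc t) - p s" using st by (intro sum_Suc_diff) simp
  have "(\<Sum>k = s..t. \<gamma> * pull t) \<le> (\<Sum>k = s..t. p (Suc k) - p k)"
  proof (intro sum_mono)
    fix k assume "k \<in> {s..t}"
    hence "\<gamma> * pull t \<le> \<gamma> * pull k" using pullmono gpos by (intro mult_left_mono) auto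
    thus "\<gamma> * pull t \<le> p (Suc k) - p k" using dp_ge[of k] by linarith
  qed
  hence A: "N * (\<gamma> * pull t) \<le> p (Suc t) - p s" unfolding tel N_def by simp
  have "q (Suc t) = q t + same t - pull t" by (rule q_step')
  hence "- q (Suc t) \<le> pull t" using qpos[OF st order_refl] same_nonneg[of t] by linarith
  moreover have "\<gamma> * p (Suc t) / 2 < \<bar>q (Suc t)\<bar>" using s1 st ndr[of "Suc t"] by (intro nd_q) auto
  ultimately have B: "\<gamma> * p (Suc t) / 2 < pull t" using qneg by linarith
  have "N * (\<gamma> * (\<gamma> * p (Suc t) / 2)) \<le> N * (\<gamma> * pull t)"
    using B gpos by (intro mult_left_mono) auto
  with A have C: "N * \<gamma>^2 / 2 * p (Suc t) \<le> p (Suc t) - p s" by (simp add: power2_eq_square algebra_simps)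
  have "0 < \<eta> * \<gamma> / 2" using eta_pos gpos by simp
  hence ps: "0 < p s" using p_ge[OF s1] by linarith
  have pt: "p s \<le> p (Suc t)" using st by (intro p_mono) simp
  have "N * \<gamma>^2 / 2 \<le> 1 - p s / p (Suc t)" using C ps pt by (simp add: field_simps)
  also have "\<dots> \<le> ln (p (Suc t) / p s)" using ps pt by (rule ln_ge)
  finally show ?thesis unfolding N_def .
qed

end

context dyn begin

lemma last_phase:
  assumes s1: "1 \<le> s" and sT: "s \<le> T" and qpos: "\<And>k. s \<le> k \<Longrightarrow> k \<le> T \<Longrightarrow> 0 < q k"
    and ndr: "\<And>k. s \<le> k \<Longrightarrow> k \<le> T \<Longrightarrow> nd k" and qb: "\<And>k. s \<le> k \<Longrightarrow> k \<le> T \<Longrightarrow> q k \<le> \<eta>"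
  shows "real (T - s) \<le> 2 + 2 * n / \<gamma> + 45 / \<gamma>^2"
proof -
  obtain i0 where i0: "i0 < n" "z i0 s < ln (8 * \<eta>)" using witness[OF ndr[OF order_refl sT]] by blast
  have i0O: "i0 \<in> Os" by (rule witness_O[OF s1 qpos[OF order_refl sT] i0])
  define f where "f i = a i / (- b i)" for i
  obtain e where eO: "e \<in> Os" and emin: "\<And>i. i \<in> Os \<Longrightarrow> f e \<le> f i"
  proof -
    have ne: "f ` Os \<noteq> {}" using i0O by blast
    have "Min (f ` Os) \<in> f ` Os" using finOs ne by (intro Min_in) auto
    then obtain e where "e \<in> Os" "f e = Min (f ` Os)" by force
    moreover have "\<And>i. i \<in> Os \<Longrightarrow> Min (f ` Os) \<le> f i" using finOs by (intro Min_le) auto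
    ultimately show ?thesis using that by metis
  qed
  have en: "e < n" and be: "b e < 0" using eO by (auto simp: Os_def)
  define \<kappa> where "\<kappa> = f e"
  define \<beta> where "\<beta> = - b e"
  have bpos: "0 < \<beta>" using be by (simp add: \<beta>_def)
  have kpos: "0 < \<kappa>" unfolding \<kappa>_def f_def using a_pos[OF en] be by (simp add: divide_pos_neg)
  have ake: "a e = \<beta> * \<kappa>" unfolding \<kappa>_def f_def \<beta>_def using be by simp
  define \<rho> where "\<rho> k = \<kappa> * p k - q k" for k
  have ze: "z e k = \<beta> * \<rho> k" for k unfolding z_def \<rho>_def ake \<beta>_def by (simp add: algebra_simps)
  have zO: "(- b i) * \<rho> k \<le> z i k" if i: "i \<in> Os" for i k
  proof -
    have bi: "0 < - b i" using i by (simp add: Os_def)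
    have ai: "a i = (- b i) * f i" unfolding f_def using bi by simp
    have "\<kappa> * p k \<le> f i * p k" using emin[OF i] p_nonneg unfolding \<kappa>_def by (intro mult_right_mono) auto
    hence "(- b i) * (\<kappa> * p k - q k) \<le> (- b i) * (f i * p k - q k)" using bi by (intro mult_left_mono) auto
    thus ?thesis unfolding \<rho>_def z_def ai by (simp add: algebra_simps)
  qed
  define c1 where "c1 = 2 * n / (\<eta> * \<gamma>)"
  have c1pos: "0 < c1" using npos' eta_pos gpos by (simp add: c1_def)
  define y where "y k = \<eta> * FO k" for k
  define \<Phi> where "\<Phi> k = min (\<rho> k * c1) 1 + min (5 / (\<gamma>^2 * y k)) (45 / \<gamma>^2 + 1)" for k
  have kin: "1 \<le> k" "0 < q k" "nd k" "q k \<le> \<eta>" if "s \<le> k" "k \<le> T" for k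
    using that s1 qpos ndr qb by auto
  have ypos: "0 < y k" if "s \<le> k" "k \<le> T" for k
    unfolding y_def using FO_pos[OF kin(1-3)[OF that]] eta_pos by simp
  have ybig: "1 / 9 < y k" if "s \<le> k" "k \<le> T" for k
  proof -
    have "1 / (8 * \<eta>) - eps < FO k" by (rule nd_FO[OF kin(1-3)[OF that]])
    hence "\<eta> * (1 / (8 * \<eta>) - eps) < \<eta> * FO k" using eta_pos by (intro mult_strict_left_mono) auto
    moreover have "\<eta> * (1 / (8 * \<eta>) - eps) = 1 / 8 - \<eta> * eps" using eta_pos by (simp add: field_simps)
    ultimately have "1 / 8 - \<eta> * eps < y k" unfolding y_def by simp
    thus ?thesis using eta_eps g2 by linarith
  qed
  have step: "\<Phi> k + 1 \<le> \<Phi> (Suc k)" if k: "s \<le> k" "k < T" for k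
  proof -
    note hk = kin[of k] kin[of "Suc k"]
    have k1: "1 \<le> k" "0 < q k" "nd k" "q k \<le> \<eta>" using hk k by auto
    have k2: "1 \<le> Suc k" "0 < q (Suc k)" "nd (Suc k)" using hk k by auto
    have dp: "p k \<le> p (Suc k)" by (rule p_mono1)
    have qs: "q (Suc k) = q k + same k - pull k" by (rule q_step')
    have ps: "same k \<le> pull k" by (rule pull_ge_same[OF k1(1,2,4,3)])
    have R1: "\<rho> k \<le> \<rho> (Suc k)"
    proof -
      have "\<kappa> * p k \<le> \<kappa> * p (Suc k)" using dp kpos by (intro mult_left_mono) auto
      thus ?thesis unfolding \<rho>_def using qs ps by linarith
    qed
    have R3: "y (Suc k) \<le> y k"
    proof -
      have "(\<Sum>i\<in>Os. ll (z i (Suc k))) \<le> (\<Sum>i\<in>Os. ll (z i k))"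
        by (intro sum_mono ll_antimono less_imp_le[OF z_strict[OF k1(1-3)]])
      thus ?thesis unfolding y_def FO_def using eta_pos npos' by (intro mult_left_mono divide_right_mono) auto
    qed
    have yk: "0 < y k" "0 < y (Suc k)" using ypos k by auto
    have inv_mono: "5 / (\<gamma>^2 * y k) \<le> 5 / (\<gamma>^2 * y (Suc k))"
      using R3 yk g2 by (intro divide_left_mono mult_left_mono mult_pos_pos) auto
    show ?thesis
    proof (cases "\<rho> k \<le> 0")
      case True
      have gge: "1/2 \<le> gg (z e k)" using ze[of k] True bpos
        by (intro gg_ge_half) (simp add: mult_nonneg_nonpos)
      have A1: "\<eta> / n * (gg (z e k) * a e) \<le> p (Suc k) - p k"
      proof -
        have "gg (z e k) * a e \<le> (\<Sum>i<n. gg (z i k) * a i)"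
          using en by (intro member_le_sum) (auto intro!: mult_nonneg_nonneg less_imp_le[OF gg_pos] less_imp_le[OF a_pos])
        hence "\<eta> / n * (gg (z e k) * a e) \<le> \<eta> / n * (\<Sum>i<n. gg (z i k) * a i)"
          using eta_pos npos' by (intro mult_left_mono) auto
        thus ?thesis using p_step[of k] by (simp add: z_def)
      qed
      have A2: "\<eta> / n * (gg (z e k) * \<beta>) \<le> pull k"
      proof -
        have "gg (z e k) * \<beta> \<le> (\<Sum>i\<in>Os. gg (z i k) * (- b i))"
          unfolding \<beta>_def using eO finOs
          by (intro member_le_sum) (auto simp: Os_def intro!: mult_nonneg_nonpos less_imp_le[OF gg_pos])
        thus ?thesis unfolding pull_def using eta_pos npos' by (intro mult_left_mono) auto
      qed
      have amgm: "2 * \<gamma> \<le> \<kappa> * a e + \<beta>"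
      proof -
        have "2 * a e * \<beta> \<le> (a e)^2 + \<beta>^2" using zero_le_power2[of "a e - \<beta>"] by (simp add: power2_eq_square algebra_simps)
        hence "2 * a e \<le> ((a e)^2 + \<beta>^2) / \<beta>" using bpos by (simp add: field_simps)
        also have "\<dots> = \<kappa> * a e + \<beta>" using bpos ake by (simp add: field_simps power2_eq_square)
        finally show ?thesis using a_ge[OF en] by linarith
      qed
      have "\<eta> / n * (1/2 * (2 * \<gamma>)) \<le> \<eta> / n * (gg (z e k) * (\<kappa> * a e + \<beta>))"
        using gge amgm eta_pos npos' gpos by (intro mult_left_mono mult_mono) auto
      also have "\<dots> = \<kappa> * (\<eta> / n * (gg (z e k) * a e)) + \<eta> / n * (gg (z e k) * \<beta>)" by (simp add: algebra_simps)
      also have "\<dots> \<le> \<kappa> * (p (Suc k) - p k) + pull k" using A1 A2 kpos by (intro add_mono mult_left_mono) auto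
      finally have B: "\<eta> * \<gamma> / n \<le> \<kappa> * (p (Suc k) - p k) + pull k" by simp
      have C: "same k \<le> \<eta> * \<gamma> / (2 * n)"
      proof -
        have "same k \<le> \<eta> * eps" by (rule same_le[OF k1(1,2)])
        also have "\<dots> \<le> \<gamma> / 2"
        proof -
          have "\<gamma>^2 \<le> \<gamma>" using gle1 gpos by (simp add: power2_eq_square mult_left_le)
          thus ?thesis using eta_eps gpos by linarith
        qed
        also have "\<dots> \<le> \<eta> * \<gamma> / (2 * n)" using eta_n npos' gpos by (simp add: field_simps mult_right_mono)
        finally show ?thesis .
      qed
      have "\<rho> k + \<eta> * \<gamma> / (2 * n) \<le> \<rho> (Suc k)"
      proof -
        have "\<eta> * \<gamma> / n = 2 * (\<eta> * \<gamma> / (2 * n))" by simp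
        thus ?thesis unfolding \<rho>_def using B C qs by (simp add: algebra_simps)
      qed
      hence "(\<rho> k + \<eta> * \<gamma> / (2 * n)) * c1 \<le> \<rho> (Suc k) * c1" using c1pos by (intro mult_right_mono) auto
      moreover have "(\<rho> k + \<eta> * \<gamma> / (2 * n)) * c1 = \<rho> k * c1 + 1"
        unfolding c1_def using eta_pos gpos npos' by (simp add: field_simps)
      ultimately have "\<rho> k * c1 + 1 \<le> \<rho> (Suc k) * c1" by simp
      moreover have "\<rho> k * c1 \<le> 0" using True c1pos by (simp add: mult_nonpos_nonneg)
      ultimately have "min (\<rho> k * c1) 1 + 1 \<le> min (\<rho> (Suc k) * c1) 1" by linarith
      moreover have "min (5 / (\<gamma>^2 * y k)) (45 / \<gamma>^2 + 1) \<le> min (5 / (\<gamma>^2 * y (Suc k))) (45 / \<gamma>^2 + 1)"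
        using inv_mono by linarith
      ultimately show ?thesis unfolding \<Phi>_def by linarith
    next
      case False
      hence rpos: "0 < \<rho> k" by simp
      have allpos: "0 \<le> z i k" if "i \<in> Os" for i
      proof -
        have "0 \<le> (- b i) * \<rho> k" using Os_b[OF that] rpos by (simp add: mult_nonpos_nonneg)
        thus ?thesis using zO[OF that, of k] by linarith
      qed
      define D where "D = \<eta> * \<gamma>^2 * GO k - \<eta> * eps"
      have D0: "0 \<le> D" using GO_big[OF k1(1-3)] unfolding D_def by linarith
      have Dge: "\<gamma>^2 * y k / 2 - \<eta> * eps \<le> D"
      proof -
        have "FO k / 2 \<le> GO k" using allpos by (intro GO_ge_FO)
        hence "\<eta> * \<gamma>^2 * (FO k / 2) \<le> \<eta> * \<gamma>^2 * GO k" using eta_pos g2 by (intro mult_left_mono) auto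
        thus ?thesis unfolding D_def y_def by (simp add: algebra_simps)
      qed
      have Y: "y (Suc k) * (1 + D / 2) \<le> y k"
      proof -
        have "(\<Sum>i\<in>Os. ll (z i (Suc k)) * (1 + D / 2)) \<le> (\<Sum>i\<in>Os. ll (z i k))"
        proof (intro sum_mono)
          fix i assume i: "i \<in> Os"
          have "z i k + D \<le> z i (Suc k)" using z_inc[OF k1(1,2) i] unfolding D_def by simp
          hence "ll (z i (Suc k)) \<le> ll (z i k + D)" by (rule ll_antimono)
          hence "ll (z i (Suc k)) * (1 + D / 2) \<le> ll (z i k + D) * (1 + D / 2)" using D0 by (intro mult_right_mono) auto
          also have "\<dots> \<le> ll (z i k)" by (rule ll_shift[OF allpos[OF i] D0])
          finally show "ll (z i (Suc k)) * (1 + D / 2) \<le> ll (z i k)" .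
        qed
        hence "(\<Sum>i\<in>Os. ll (z i (Suc k))) * (1 + D / 2) \<le> (\<Sum>i\<in>Os. ll (z i k))" by (simp add: sum_distrib_right)
        hence "\<eta> * ((\<Sum>i\<in>Os. ll (z i (Suc k))) * (1 + D / 2)) / n \<le> \<eta> * (\<Sum>i\<in>Os. ll (z i k)) / n"
          using eta_pos npos' by (intro divide_right_mono mult_left_mono) auto
        thus ?thesis unfolding y_def FO_def by (simp add: algebra_simps)
      qed
      have yb: "1/9 < y k" using ybig k by simp
      have inc: "1 / y k + \<gamma>^2 / 5 \<le> 1 / y (Suc k)"
      proof -
        have "(1 + D / 2) / y k \<le> 1 / y (Suc k)" using Y yk by (simp add: field_simps)
        moreover have "1 / y k + \<gamma>^2 / 5 \<le> (1 + D / 2) / y k"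
        proof -
          have "\<gamma>^2 / 5 \<le> D / (2 * y k)"
          proof -
            have "\<eta> * eps / (2 * y k) \<le> \<gamma>^2 / 20"
            proof -
              have "\<eta> * eps \<le> \<gamma>^2 / 100" by (rule eta_eps)
              moreover have "\<gamma>^2 / 100 \<le> \<gamma>^2 / 20 * (2 * y k)" using yb g2 by (simp add: field_simps)
              ultimately show ?thesis using yk by (simp add: field_simps)
            qed
            moreover have "(\<gamma>^2 * y k / 2 - \<eta> * eps) / (2 * y k) = \<gamma>^2 / 4 - \<eta> * eps / (2 * y k)"
              using yk by (simp add: field_simps)
            moreover have "(\<gamma>^2 * y k / 2 - \<eta> * eps) / (2 * y k) \<le> D / (2 * y k)"
              using Dge yk by (intro divide_right_mono) auto
            ultimately show ?thesis by linarith
          qed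
          thus ?thesis using yk by (simp add: add_divide_distrib)
        qed
        ultimately show ?thesis by linarith
      qed
      have "5 / (\<gamma>^2 * y k) < 45 / \<gamma>^2"
      proof -
        have "1 / y k < 9" using yb yk by (simp add: field_simps)
        thus ?thesis using g2 by (simp add: field_simps)
      qed
      moreover have "5 / (\<gamma>^2 * y k) + 1 \<le> 5 / (\<gamma>^2 * y (Suc k))"
      proof -
        have "5 / \<gamma>^2 * (1 / y k + \<gamma>^2 / 5) \<le> 5 / \<gamma>^2 * (1 / y (Suc k))"
          using inc g2 by (intro mult_left_mono) auto
        moreover have "5 / \<gamma>^2 * (1 / y k + \<gamma>^2 / 5) = 5 / (\<gamma>^2 * y k) + 1"
          using g2 yk by (simp add: field_simps)
        moreover have "5 / \<gamma>^2 * (1 / y (Suc k)) = 5 / (\<gamma>^2 * y (Suc k))" by simp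
        ultimately show ?thesis by simp
      qed
      ultimately have "min (5 / (\<gamma>^2 * y k)) (45 / \<gamma>^2 + 1) + 1 \<le> min (5 / (\<gamma>^2 * y (Suc k))) (45 / \<gamma>^2 + 1)"
        by linarith
      moreover have "min (\<rho> k * c1) 1 \<le> min (\<rho> (Suc k) * c1) 1"
      proof -
        have "\<rho> k * c1 \<le> \<rho> (Suc k) * c1" using R1 c1pos by (intro mult_right_mono) auto
        thus ?thesis by linarith
      qed
      ultimately show ?thesis unfolding \<Phi>_def by linarith
    qed
  qed
  have ind: "\<Phi> s + real d \<le> \<Phi> (s + d)" if "s + d \<le> T" for d
    using that
  proof (induction d)
    case 0 thus ?case by simp
  next
    case (Suc d)
    hence "\<Phi> s + real d \<le> \<Phi> (s + d)" by simp
    moreover have "\<Phi> (s + d) + 1 \<le> \<Phi> (Suc (s + d))" using Suc.prems by (intro step) auto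
    ultimately show ?case by simp
  qed
  have "\<Phi> s + real (T - s) \<le> \<Phi> T" using ind[of "T - s"] sT by simp
  moreover have "- (2 * n / \<gamma>) \<le> \<Phi> s"
  proof -
    have "0 \<le> \<kappa> * p s" using kpos p_nonneg[of s] by simp
    hence "- \<eta> \<le> \<rho> s" unfolding \<rho>_def using qb[OF order_refl sT] by linarith
    hence "- \<eta> * c1 \<le> \<rho> s * c1" using c1pos by (intro mult_right_mono) auto
    moreover have "- \<eta> * c1 = - (2 * n / \<gamma>)" unfolding c1_def using eta_pos gpos by (simp add: field_simps)
    moreover have "- (2 * n / \<gamma>) \<le> 1"
    proof -
      have "0 \<le> 2 * n / \<gamma>" using npos' gpos by simp
      thus ?thesis by linarith
    qed
    moreover have "0 \<le> min (5 / (\<gamma>^2 * y s)) (45 / \<gamma>^2 + 1)"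
      using ypos[OF order_refl sT] g2 by simp
    ultimately show ?thesis unfolding \<Phi>_def by linarith
  qed
  moreover have "\<Phi> T \<le> 1 + (45 / \<gamma>^2 + 1)" unfolding \<Phi>_def by linarith
  ultimately show ?thesis by linarith
qed

end

context dyn begin

definition CC where "CC = 2 + 2 * n / \<gamma> + 45 / \<gamma>^2"

lemma ps_pos: "1 \<le> s \<Longrightarrow> 0 < p s"
proof -
  assume "1 \<le> s"
  moreover have "0 < \<eta> * \<gamma> / 2" using eta_pos gpos by simp
  ultimately show ?thesis using p_ge[of s] by linarith
qed

lemma pos_case:
  assumes s1: "1 \<le> s" and sT: "s \<le> T" and qs: "0 < q s" and ndall: "\<And>k. k \<le> T \<Longrightarrow> nd k"
    and IH: "\<And>s'. s < s' \<Longrightarrow> s' \<le> T \<Longrightarrow> real (T - s') \<le> 2 / \<gamma>^2 * ln (2 * \<eta> / \<gamma> / p s') + CC"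
  shows "real (T - s) \<le> 2 / \<gamma>^2 * ln (2 * \<eta> / \<gamma> / p s) + CC"
proof -
  have qb: "\<bar>q k\<bar> \<le> \<eta>" if "1 \<le> k" "k \<le> T" for k
    using that ndall by (intro q_bound) auto
  have pbound: "p k < 2 * \<eta> / \<gamma>" if "1 \<le> k" "k \<le> T" for k
    using nd_p[OF that(1) ndall[OF that(2)] qb[OF that]] .
  have lnpos: "0 \<le> ln (2 * \<eta> / \<gamma> / p k)" if "1 \<le> k" "k \<le> T" for k
  proof -
    have "p k \<le> 2 * \<eta> / \<gamma>" using pbound[OF that] by simp
    hence "1 \<le> 2 * \<eta> / \<gamma> / p k" using ps_pos[OF that(1)] by (subst le_divide_eq_1_pos) auto
    thus ?thesis by simp
  qed
  show ?thesis
  proof (cases "\<forall>k. s \<le> k \<and> k \<le> T \<longrightarrow> 0 < q k")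
    case True
    have "real (T - s) \<le> CC" unfolding CC_def
      using s1 by (intro last_phase[OF s1 sT]) (use True ndall qb in \<open>auto simp: abs_le_iff\<close>)
    moreover have "0 \<le> 2 / \<gamma>^2 * ln (2 * \<eta> / \<gamma> / p s)" using lnpos[OF s1 sT] g2 by simp
    ultimately show ?thesis by linarith
  next
    case False
    define t1 where "t1 = (LEAST k. s \<le> k \<and> k \<le> T \<and> \<not> 0 < q k)"
    have ex: "\<exists>k. s \<le> k \<and> k \<le> T \<and> \<not> 0 < q k" using False by blast
    have t1: "s \<le> t1" "t1 \<le> T" "\<not> 0 < q t1" using LeastI_ex[OF ex] unfolding t1_def by auto
    have before: "0 < q k" if "s \<le> k" "k < t1" for k
      using not_less_Least[of k "\<lambda>k. s \<le> k \<and> k \<le> T \<and> \<not> 0 < q k"] that t1 unfolding t1_def by auto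
    have "t1 \<noteq> s" using t1 qs by auto
    hence st1: "s < t1" using t1 by simp
    define t where "t = t1 - 1"
    have tt: "Suc t = t1" "s \<le> t" using st1 by (auto simp: t_def)
    have "1 \<le> t1" using s1 st1 by simp
    hence "q t1 \<noteq> 0" using nd_q_nz ndall t1(2) by blast
    hence qneg: "q (Suc t) < 0" using t1(3) tt(1) by simp
    have fl: "real (Suc t - s) * \<gamma>^2 / 2 \<le> ln (p (Suc t) / p s)"
      by (rule flip_phase[OF s1 tt(2)]) (use before tt qneg ndall t1 in auto)
    have ih: "real (T - Suc t) \<le> 2 / \<gamma>^2 * ln (2 * \<eta> / \<gamma> / p (Suc t)) + CC"
      using tt t1 st1 by (intro IH) auto
    have pp: "0 < p s" "0 < p (Suc t)" using s1 tt by (auto intro!: ps_pos)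
    have "real (Suc t - s) \<le> 2 / \<gamma>^2 * ln (p (Suc t) / p s)"
      using fl g2 by (simp add: field_simps)
    moreover have LL: "ln (p (Suc t) / p s) + ln (2 * \<eta> / \<gamma> / p (Suc t)) = ln (2 * \<eta> / \<gamma> / p s)"
    proof -
      have eq: "(p (Suc t) / p s) * (2 * \<eta> / \<gamma> / p (Suc t)) = 2 * \<eta> / \<gamma> / p s" using pp by (simp add: field_simps)
      have "0 < 2 * \<eta> / \<gamma> / p (Suc t)" using pp eta_pos gpos by simp
      hence "ln ((p (Suc t) / p s) * (2 * \<eta> / \<gamma> / p (Suc t))) = ln (p (Suc t) / p s) + ln (2 * \<eta> / \<gamma> / p (Suc t))"
        using pp by (intro ln_mult_pos) auto
      thus ?thesis unfolding eq by simp
    qed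
    moreover have "real (T - s) = real (Suc t - s) + real (T - Suc t)" using tt t1 by simp
    moreover have "2 / \<gamma>^2 * ln (2 * \<eta> / \<gamma> / p s) = 2 / \<gamma>^2 * ln (p (Suc t) / p s) + 2 / \<gamma>^2 * ln (2 * \<eta> / \<gamma> / p (Suc t))"
      unfolding LL[symmetric] by (simp add: distrib_left)
    ultimately show ?thesis using ih by linarith
  qed
qed

end

context dyn begin

lemma count:
  assumes ndall: "\<And>k. k \<le> T \<Longrightarrow> nd k"
  shows "1 \<le> s \<Longrightarrow> s \<le> T \<Longrightarrow> real (T - s) \<le> 2 / \<gamma>^2 * ln (2 * \<eta> / \<gamma> / p s) + CC"
proof (induction "T - s" arbitrary: s rule: less_induct)
  case less
  have IH: "\<And>s'. s < s' \<Longrightarrow> s' \<le> T \<Longrightarrow> real (T - s') \<le> 2 / \<gamma>^2 * ln (2 * \<eta> / \<gamma> / p s') + CC"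
  proof -
    fix s' assume a: "s < s'" "s' \<le> T"
    hence "T - s' < T - s" by linarith
    moreover have "1 \<le> s'" using a less.prems by linarith
    ultimately show "real (T - s') \<le> 2 / \<gamma>^2 * ln (2 * \<eta> / \<gamma> / p s') + CC"
      using less.hyps a(2) by blast
  qed
  have qnz: "q s \<noteq> 0" using nd_q_nz[OF less(2) ndall[OF less(3)]] .
  show ?case
  proof (cases "0 < q s")
    case True thus ?thesis by (rule pos_case[OF less(2,3) _ ndall IH])
  next
    case False
    hence qm: "0 < - q s" using qnz by linarith
    interpret m: dyn n a "\<lambda>i. - b i" \<eta> \<gamma> p "\<lambda>k. - q k" by (rule mirror)
    have ndm: "m.nd k = nd k" for k unfolding m.nd_def nd_def m.F_def F_def m.z_def z_def by simp
    have CCm: "m.CC = CC" unfolding m.CC_def CC_def ..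
    show ?thesis using m.pos_case[OF less(2,3) qm] ndm ndall IH CCm by simp
  qed
qed

theorem main: "\<exists>t. real t \<le> 2 + 4 * n / \<gamma> + 142 * ln (2 / \<gamma>^2) / \<gamma>^2 \<and> F t \<le> 1 / (8 * \<eta>)"
proof (rule ccontr)
  define B where "B = 2 + 4 * n / \<gamma> + 142 * ln (2 / \<gamma>^2) / \<gamma>^2"
  define T where "T = nat \<lfloor>B\<rfloor>"
  assume H: "\<not> ?thesis"
  have l2: "ln 2 \<le> ln (2 / \<gamma>^2)" using g2 by (subst ln_le_cancel_iff) (auto simp: field_simps)
  have lhalf: "1/2 \<le> ln (2 / \<gamma>^2)" using l2 ln2_ge_half by linarith
  have ng: "1 \<le> n / \<gamma>" using npos' gpos gle1 n_pos by (simp add: field_simps)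
  have Bge: "2 \<le> B"
  proof -
    have "0 \<le> 4 * n / \<gamma>" using gpos by simp
    moreover have "0 \<le> 142 * ln (2 / \<gamma>^2) / \<gamma>^2" using lhalf g2 by simp
    ultimately show ?thesis unfolding B_def by linarith
  qed
  have fl0: "0 \<le> \<lfloor>B\<rfloor>" using Bge by simp
  have rT: "real T = real_of_int \<lfloor>B\<rfloor>" unfolding T_def using fl0 by simp
  have TB: "real T \<le> B" "B < real T + 1" unfolding rT by simp_all
  have T1: "1 \<le> T" using TB Bge by linarith
  have ndall: "nd k" if "k \<le> T" for k
  proof -
    have "real k \<le> B" using that TB by linarith
    hence "\<not> F k \<le> 1 / (8 * \<eta>)" using H unfolding B_def by blast
    thus ?thesis unfolding nd_def by simp
  qed
  have c: "real (T - 1) \<le> 2 / \<gamma>^2 * ln (2 * \<eta> / \<gamma> / p 1) + CC" by (rule count[OF ndall order_refl T1])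
  have "2 * \<eta> / \<gamma> / p 1 \<le> 4 / \<gamma>^2"
  proof -
    have "0 < \<eta> * \<gamma> / 2" using eta_pos gpos by simp
    hence "2 * \<eta> / \<gamma> / p 1 \<le> 2 * \<eta> / \<gamma> / (\<eta> * \<gamma> / 2)" using p1 eta_pos gpos ps_pos[of 1] by (intro divide_left_mono) auto
    also have "\<dots> = 4 / \<gamma>^2" using eta_pos gpos by (simp add: field_simps power2_eq_square)
    finally show ?thesis .
  qed
  moreover have "0 < 2 * \<eta> / \<gamma> / p 1" using ps_pos[of 1] eta_pos gpos by simp
  ultimately have "ln (2 * \<eta> / \<gamma> / p 1) \<le> ln (4 / \<gamma>^2)" by (subst ln_le_cancel_iff) auto
  also have "ln (4 / \<gamma>^2) = ln 2 + ln (2 / \<gamma>^2)"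
  proof -
    have "ln (2 * (2 / \<gamma>^2)) = ln 2 + ln (2 / \<gamma>^2)" using g2 by (intro ln_mult_pos) auto
    moreover have "2 * (2 / \<gamma>^2) = 4 / \<gamma>^2" by simp
    ultimately show ?thesis by simp
  qed
  finally have L: "ln (2 * \<eta> / \<gamma> / p 1) \<le> ln 2 + ln (2 / \<gamma>^2)" .
  have "real (T - 1) = real T - 1" using T1 by simp
  hence "B - 2 < 2 / \<gamma>^2 * (ln 2 + ln (2 / \<gamma>^2)) + CC"
  proof -
    have "2 / \<gamma>^2 * ln (2 * \<eta> / \<gamma> / p 1) \<le> 2 / \<gamma>^2 * (ln 2 + ln (2 / \<gamma>^2))"
      using L g2 by (intro mult_left_mono) auto
    thus ?thesis using c TB \<open>real (T - 1) = real T - 1\<close> by linarith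
  qed
  hence "4 * n / \<gamma> + 142 * ln (2 / \<gamma>^2) / \<gamma>^2 < (2 * ln 2 + 2 * ln (2 / \<gamma>^2) + 45) / \<gamma>^2 + 2 + 2 * n / \<gamma>"
  proof -
    have "(2 * ln 2 + 2 * ln (2 / \<gamma>^2) + 45) / \<gamma>^2 = 2 / \<gamma>^2 * (ln 2 + ln (2 / \<gamma>^2)) + 45 / \<gamma>^2"
      by (simp add: add_divide_distrib algebra_simps)
    thus ?thesis using \<open>B - 2 < _\<close> unfolding B_def CC_def by linarith
  qed
  moreover have "(2 * ln 2 + 2 * ln (2 / \<gamma>^2) + 45) / \<gamma>^2 \<le> 142 * ln (2 / \<gamma>^2) / \<gamma>^2"
    using ln_2_less_1 lhalf g2 by (intro divide_right_mono) auto
  moreover have "2 \<le> 2 * n / \<gamma>"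
  proof -
    have "2 * n / \<gamma> = 2 * (n / \<gamma>)" by simp
    thus ?thesis using ng by linarith
  qed
  ultimately show False by linarith
qed

end

lemma cont_min: "continuous_on UNIV (\<lambda>w::real^2. Min ((\<lambda>i. w \<bullet> x i) ` {..<Suc m}))"
proof (induction m)
  case 0
  have eq: "(\<lambda>w::real^2. Min ((\<lambda>i. w \<bullet> x i) ` {..<Suc 0})) = (\<lambda>w. w \<bullet> x 0)" by (simp add: lessThan_Suc)
  show ?case by (rule ssubst[OF eq]) (intro continuous_intros)
next
  case (Suc m)
  have eqS: "(\<lambda>w::real^2. Min ((\<lambda>i. w \<bullet> x i) ` {..<Suc (Suc m)})) = (\<lambda>w. min (w \<bullet> x (Suc m)) (Min ((\<lambda>i. w \<bullet> x i) ` {..<Suc m})))"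
  proof
    fix w :: "real^2"
    define A where "A = (\<lambda>i. w \<bullet> x i) ` {..<Suc m}"
    have e1: "(\<lambda>i. w \<bullet> x i) ` {..<Suc (Suc m)} = insert (w \<bullet> x (Suc m)) A"
      unfolding A_def by (simp add: lessThan_Suc)
    have e2: "Min (insert (w \<bullet> x (Suc m)) A) = min (w \<bullet> x (Suc m)) (Min A)"
      by (rule Min.insert) (auto simp: A_def)
    show "Min ((\<lambda>i. w \<bullet> x i) ` {..<Suc (Suc m)}) = min (w \<bullet> x (Suc m)) (Min ((\<lambda>i. w \<bullet> x i) ` {..<Suc m}))"
      using e1 e2 unfolding A_def by metis
  qed
  show ?case by (rule ssubst[OF eqS]) (intro continuous_intros Suc)
qed

lemma margin_attained:
  fixes x :: "nat \<Rightarrow> real^2"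
  assumes n1: "n \<ge> 1" and xn: "\<And>i. i < n \<Longrightarrow> norm (x i) \<le> 1" and sep: "\<exists>w. \<forall>i<n. w \<bullet> x i > 0"
  shows "\<exists>u. norm u = 1 \<and> (\<forall>i<n. max_margin n x \<le> u \<bullet> x i) \<and> 0 < max_margin n x \<and> max_margin n x \<le> 1"
proof -
  define S where "S = {w::real^2. norm w = 1}"
  define h where "h w = (MIN i\<in>{..<n}. w \<bullet> x i)" for w :: "real^2"
  obtain m where m: "n = Suc m" using n1 by (cases n) auto
  have S: "S = sphere 0 1" unfolding S_def by (auto simp: sphere_def)
  have cS: "compact S" unfolding S by (rule compact_sphere)
  have neS: "S \<noteq> {}" unfolding S_def using norm_axis_1[of 1] by blast
  have ch: "continuous_on S h" unfolding h_def m using cont_min[of x m] by (rule continuous_on_subset) simp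
  obtain u where uS: "u \<in> S" and umax: "\<And>w. w \<in> S \<Longrightarrow> h w \<le> h u"
    using continuous_attains_sup[OF cS neS ch] by blast
  have mm: "max_margin n x = h u" unfolding max_margin_def h_def[symmetric] S_def[symmetric]
    using uS umax by (intro cSup_eq_maximum) auto
  have fin: "finite ((\<lambda>i. w \<bullet> x i) ` {..<n})" "(\<lambda>i. w \<bullet> x i) ` {..<n} \<noteq> {}" for w :: "real^2"
    using n1 by (auto simp: lessThan_empty_iff)
  have hle: "h w \<le> w \<bullet> x i" if "i < n" for w i unfolding h_def using fin[of w] that by (intro Min_le) auto
  obtain w where w: "\<forall>i<n. w \<bullet> x i > 0" using sep by blast
  have wnz: "w \<noteq> 0" using w n1 by (metis inner_zero_left less_irrefl zero_less_one less_le_trans)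
  define u0 where "u0 = w /\<^sub>R norm w"
  have u0S: "u0 \<in> S" unfolding S_def u0_def using wnz by simp
  have "0 < h u0" unfolding h_def
  proof (subst Min_gr_iff)
    show "finite ((\<lambda>i. u0 \<bullet> x i) ` {..<n})" "(\<lambda>i. u0 \<bullet> x i) ` {..<n} \<noteq> {}" using fin by auto
    show "\<forall>a\<in>(\<lambda>i. u0 \<bullet> x i) ` {..<n}. 0 < a" using w wnz by (auto simp: u0_def)
  qed
  hence gpos: "0 < max_margin n x" using umax[OF u0S] mm by simp
  have "h u \<le> u \<bullet> x 0" using hle n1 by simp
  also have "\<dots> \<le> norm u * norm (x 0)" by (rule norm_cauchy_schwarz)
  also have "\<dots> \<le> 1" using uS xn[of 0] n1 by (simp add: S_def)
  finally have gle: "max_margin n x \<le> 1" using mm by simp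
  show ?thesis using uS gpos gle hle mm by (auto simp: S_def)
qed

definition rot :: "real^2 \<Rightarrow> real^2" where "rot u = (\<chi> j. if j = 1 then - (u $ 2) else u $ 1)"

lemma frame:
  fixes u v w :: "real^2" assumes "norm u = 1"
  shows "v \<bullet> w = (v \<bullet> u) * (w \<bullet> u) + (v \<bullet> rot u) * (w \<bullet> rot u)"
proof -
  have "u \<bullet> u = 1" using assms by (simp add: dot_square_norm)
  hence uu: "(u$1)^2 + (u$2)^2 = 1" by (simp add: inner_vec_def sum_2 power2_eq_square)
  have r1: "rot u $ 1 = - (u $ 2)" and r2: "rot u $ 2 = u $ 1" by (simp_all add: rot_def)
  have "(v \<bullet> u) * (w \<bullet> u) + (v \<bullet> rot u) * (w \<bullet> rot u)
      = (v$1 * w$1 + v$2 * w$2) * ((u$1)^2 + (u$2)^2)"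
    by (simp add: inner_vec_def sum_2 r1 r2 power2_eq_square algebra_simps)
  also have "\<dots> = v \<bullet> w" using uu by (simp add: inner_vec_def sum_2)
  finally show ?thesis ..
qed

theorem lemma9:
  fixes n :: nat and x :: "nat \<Rightarrow> real^2" and \<eta> :: real
  assumes "n \<ge> 1"
    and "\<And>i. i < n \<Longrightarrow> norm (x i) \<le> 1"
    and "\<exists>w. \<forall>i<n. w \<bullet> x i > 0"
    and "\<eta> \<ge> max (real n) (32 / (max_margin n x)\<^sup>2 * ln (256 / (max_margin n x)\<^sup>2))"
  shows "\<exists>t. logloss n x (gd n x \<eta> t) \<le> 1 / (8 * \<eta>) \<and>
         real (LEAST t. logloss n x (gd n x \<eta> t) \<le> 1 / (8 * \<eta>))
           \<le> 2 + 4 * real n / max_margin n x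
               + 142 * ln (2 / (max_margin n x)\<^sup>2) / (max_margin n x)\<^sup>2"
proof -
  define \<gamma> where "\<gamma> = max_margin n x"
  obtain u where u1: "norm u = 1" and uge: "\<forall>i<n. \<gamma> \<le> u \<bullet> x i" and gpos: "0 < \<gamma>" and gle: "\<gamma> \<le> 1"
    using margin_attained[OF assms(1-3)] unfolding \<gamma>_def by blast
  define e where "e = rot u"
  define a where "a i = x i \<bullet> u" for i
  define b where "b i = x i \<bullet> e" for i
  define p where "p k = gd n x \<eta> k \<bullet> u" for k
  define q where "q k = gd n x \<eta> k \<bullet> e" for k
  have fr: "v \<bullet> w = (v \<bullet> u) * (w \<bullet> u) + (v \<bullet> e) * (w \<bullet> e)" for v w :: "real^2"
    unfolding e_def by (rule frame[OF u1])
  have zz: "gd n x \<eta> k \<bullet> x i = a i * p k + b i * q k" for k i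
    using fr[of "gd n x \<eta> k" "x i"] unfolding a_def b_def p_def q_def by (simp add: algebra_simps)
  have npos: "0 < real n" using assms(1) by simp
  have gd_step: "gd n x \<eta> (Suc k) \<bullet> v = gd n x \<eta> k \<bullet> v + \<eta> / n * (\<Sum>i<n. gg (a i * p k + b i * q k) * (x i \<bullet> v))" for k v
  proof -
    have "gd n x \<eta> (Suc k) \<bullet> v = gd n x \<eta> k \<bullet> v - \<eta> * (\<Sum>i<n. (- 1 / (real n * (1 + exp (gd n x \<eta> k \<bullet> x i)))) * (x i \<bullet> v))"
      by (simp add: inner_diff_left inner_sum_left)
    also have "(\<Sum>i<n. (- 1 / (real n * (1 + exp (gd n x \<eta> k \<bullet> x i)))) * (x i \<bullet> v)) = - (1 / n) * (\<Sum>i<n. gg (a i * p k + b i * q k) * (x i \<bullet> v))"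
      unfolding sum_distrib_left zz gg_def by (intro sum.cong) auto
    finally show ?thesis by simp
  qed
  interpret d: dyn n a b \<eta> \<gamma> p q
  proof
    show "1 \<le> n" using assms(1) .
    show "\<And>i. i < n \<Longrightarrow> \<gamma> \<le> a i" using uge by (simp add: a_def inner_commute)
    show "\<And>i. i < n \<Longrightarrow> (a i)^2 + (b i)^2 \<le> 1"
    proof -
      fix i assume i: "i < n"
      have "(a i)^2 + (b i)^2 = x i \<bullet> x i" using fr[of "x i" "x i"] by (simp add: a_def b_def power2_eq_square)
      also have "\<dots> = (norm (x i))^2" by (simp add: dot_square_norm)
      also have "\<dots> \<le> 1" using assms(2)[OF i] by (simp add: power_le_one)
      finally show "(a i)^2 + (b i)^2 \<le> 1" .
    qed
    show "0 < \<gamma>" "\<gamma> \<le> 1" using gpos gle by auto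
    show "real n \<le> \<eta>" using assms(4) by simp
    show "32 / \<gamma>^2 * ln (256 / \<gamma>^2) \<le> \<eta>" using assms(4) unfolding \<gamma>_def by simp
    show "p 0 = 0" "q 0 = 0" by (simp_all add: p_def q_def)
    show "\<And>k. p (Suc k) = p k + \<eta> / n * (\<Sum>i<n. gg (a i * p k + b i * q k) * a i)"
      using gd_step unfolding p_def a_def by blast
    show "\<And>k. q (Suc k) = q k + \<eta> / n * (\<Sum>i<n. gg (a i * p k + b i * q k) * b i)"
      using gd_step unfolding q_def b_def by blast
  qed
  have FF: "logloss n x (gd n x \<eta> k) = d.F k" for k
    unfolding logloss_def d.F_def d.z_def ll_def zz by simp
  obtain t where t: "real t \<le> 2 + 4 * n / \<gamma> + 142 * ln (2 / \<gamma>^2) / \<gamma>^2" "d.F t \<le> 1 / (8 * \<eta>)"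
    using d.main by blast
  have tt: "logloss n x (gd n x \<eta> t) \<le> 1 / (8 * \<eta>)" using t(2) FF by simp
  have "(LEAST t. logloss n x (gd n x \<eta> t) \<le> 1 / (8 * \<eta>)) \<le> t" by (rule Least_le) (rule tt)
  hence "real (LEAST t. logloss n x (gd n x \<eta> t) \<le> 1 / (8 * \<eta>)) \<le> real t" by simp
  thus ?thesis using tt t(1) unfolding \<gamma>_def by auto
qed

end
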